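(* Let $\varepsilon>0$ be small, $x$ large, $0\le\theta\le\frac1{30}$, $\rho=\frac37(1-4\theta)-\varepsilon$, and $z_2\le x^{1/3-2\theta-2\varepsilon^2}$. Let $$\mathcal{D}^{-,\mathrm{SEM}}=\{p_1\cdots p_r\le x^{\rho}:\ z_2\ge p_1>\dots>p_r,\ p_1\cdots p_{2k-1}p_{2k}^2\le x^{\rho}\text{ for all }k\ge1\}$$ ($p_i$ primes). Then for any $D\in[x^{1/3-2\theta-2\varepsilon^2},x^{\rho}]$, every $d\in\mathcal{D}^{-,\mathrm{SEM}}$ can be written as $d=d_1d_2$ with positive integers $d_1,d_2$ satisfying $d_1\le D$ and $d_1d_2^2\le x^{1-4\theta-2\varepsilon^2}/D$; moreover one can take either $d_1\ge x^{0.1}$ or $d_2=1$.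
   Context: Conditions in the definition of $\mathcal{D}^{-,\mathrm{SEM}}$ involving indices larger than $r$ are vacuous. *)

theory Defs
  imports Complex_Main "HOL-Computational_Algebra.Primes"
begin

text \<open>The primes are given as a list
  ps = [p_1, ..., p_r] (0-indexed: ps!(i-1) = p_i).\<close>
definition D_minus_SEM :: "real \<Rightarrow> real \<Rightarrow> real \<Rightarrow> nat set" where
  "D_minus_SEM x \<rho> z2 = {prod_list ps | ps.
      ps \<noteq> [] \<and> (\<forall>p\<in>set ps. prime p) \<and> sorted_wrt (>) ps \<and>
      real (hd ps) \<le> z2 \<and> real (prod_list ps) \<le> x powr \<rho> \<and>
      (\<forall>k\<ge>1. 2 * k \<le> length ps \<longrightarrow>
          real (prod_list (take (2 * k - 1) ps) * (ps ! (2 * k - 1))^2) \<le> x powr \<rho>)}"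

end

theory Submission
  imports Defs
begin

fun greedy :: "real \<Rightarrow> nat list \<Rightarrow> nat list \<times> nat list" where
"greedy B [] = ([], [])" |
"greedy B (p#ps) = (if real p \<le> B then (case greedy (B / real p) ps of (a,b) \<Rightarrow> (p#a, b))
                    else (case greedy B ps of (a,b) \<Rightarrow> (a, p#b)))"

lemma prod_list_pos: "\<forall>p\<in>set xs. (p::nat) > 0 \<Longrightarrow> prod_list xs > 0"
  by (induction xs) auto

lemma elem_le_prod_list: "\<forall>p\<in>set xs. (p::nat) > 0 \<Longrightarrow> q \<in> set xs \<Longrightarrow> q \<le> prod_list xs"
proof (induction xs)
  case Nil then show ?case by simp
next
  case (Cons a xs)
  have pa: "prod_list xs > 0" using Cons.prems prod_list_pos by auto
  show ?case
  proof (cases "q = a")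
    case True then show ?thesis using pa by simp
  next
    case False
    then have "q \<le> prod_list xs" using Cons by auto
    moreover have "a > 0" using Cons.prems by auto
    ultimately show ?thesis by (simp add: le_trans [OF _ mult_le_mono2] trans_le_add1)
      (metis One_nat_def Suc_leI le_trans mult_le_mono1 mult_1)
  qed
qed

lemma greedy_props:
  assumes "\<forall>p\<in>set ps. (p::nat) > 0" "B \<ge> 1" "greedy B ps = (a, b)"
  shows "prod_list a * prod_list b = prod_list ps \<and> real (prod_list a) \<le> B \<and>
         (\<forall>q\<in>set b. real (prod_list a) * real q > B) \<and> set a \<subseteq> set ps \<and> set b \<subseteq> set ps"
  using assms
proof (induction ps arbitrary: B a b)
  case Nil then show ?case by auto
next
  case (Cons p ps)
  have pp: "p > 0" using Cons.prems by auto
  show ?case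
  proof (cases "real p \<le> B")
    case True
    obtain a' b' where g: "greedy (B / real p) ps = (a', b')" by fastforce
    have Bp: "B / real p \<ge> 1" using pp True by simp
    have IH: "prod_list a' * prod_list b' = prod_list ps \<and> real (prod_list a') \<le> B / real p \<and>
         (\<forall>q\<in>set b'. real (prod_list a') * real q > B / real p) \<and> set a' \<subseteq> set ps \<and> set b' \<subseteq> set ps"
      using Cons.IH[OF _ Bp g] Cons.prems by auto
    have ab: "a = p # a'" "b = b'" using Cons.prems(3) True g by auto
    have "real p * real (prod_list a') \<le> B" using IH pp by (simp add: field_simps)
    moreover have "\<forall>q\<in>set b'. real p * real (prod_list a') * real q > B"
    proof
      fix q assume "q \<in> set b'"
      then have "real (prod_list a') * real q > B / real p" using IH by auto
      then show "real p * real (prod_list a') * real q > B" using pp by (simp add: field_simps)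
    qed
    ultimately show ?thesis using IH ab by auto
  next
    case False
    obtain a' b' where g: "greedy B ps = (a', b')" by fastforce
    have IH: "prod_list a' * prod_list b' = prod_list ps \<and> real (prod_list a') \<le> B \<and>
         (\<forall>q\<in>set b'. real (prod_list a') * real q > B) \<and> set a' \<subseteq> set ps \<and> set b' \<subseteq> set ps"
      using Cons.IH[OF _ Cons.prems(2) g] Cons.prems by auto
    have ab: "a = a'" "b = p # b'" using Cons.prems(3) False g by auto
    have "prod_list a' > 0" using IH Cons.prems prod_list_pos by (meson list.set_intros(2) subsetD)
    then have "real (prod_list a') \<ge> 1" by simp
    then have "real (prod_list a') * real p \<ge> real p" by (simp add: mult_le_cancel_right1)
    then have "real (prod_list a') * real p > B" using False by simp
    then show ?thesis using IH ab by auto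
  qed
qed

lemma small:
  fixes d1 d2 q :: nat and D R XT y :: real
  assumes "d1 > 0" "d2 > 0" "real (d1*d2) \<le> R" "real q \<le> XT/(R*R)" "real d1 * real q > D"
    "D > 0" "R > 0" "XT > 0" "y \<le> D*(R*R)/XT"
  shows "real (d1*d2^2) \<le> XT/D \<and> real d1 \<ge> y"
proof -
  have q0: "real q > 0" using assms(5,6) by (metis mult_zero_right not_less_iff_gr_or_eq of_nat_0_less_iff gr0I of_nat_0)
  have "real q * (R*R) \<le> XT" using assms(4,7) by (simp add: field_simps)
  then have "D * (R*R) < real d1 * (real q * (R*R))" using assms(5,7)
    by (simp add: mult.assoc[symmetric])
  also have "\<dots> \<le> real d1 * XT" using \<open>real q * (R*R) \<le> XT\<close> assms(1) by simp
  finally have "D*(R*R)/XT < real d1" using assms(8) by (simp add: field_simps)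
  then have c2: "real d1 \<ge> y" using assms(9) by simp
  have "real (d1*d2^2) * D < real (d1*d2^2) * (real d1 * real q)" using assms by simp
  also have "\<dots> = real (d1*d2)^2 * real q" by (simp add: power2_eq_square)
  also have "\<dots> \<le> (R*R) * real q"
    using assms(3) q0 mult_mono[OF assms(3) assms(3)] assms(7) by (intro mult_right_mono) (auto simp: power2_eq_square)
  also have "\<dots> \<le> XT" using \<open>real q * (R*R) \<le> XT\<close> by (simp add: mult.commute)
  finally have "real (d1*d2^2) \<le> XT/D" using assms(6) by (simp add: field_simps)
  then show ?thesis using c2 by simp
qed

lemma core:
  fixes ps :: "nat list" and D R XT y :: real
  assumes ne: "ps \<noteq> []" and pr: "\<forall>p\<in>set ps. prime p" and so: "sorted_wrt (>) ps"
    and hd: "real (hd ps) \<le> D" and dR: "real (prod_list ps) \<le> R"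
    and sem: "length ps \<ge> 2 \<Longrightarrow> real (hd ps * (ps ! 1)^2) \<le> R"
    and DR: "D \<le> R" and RR: "R*R \<le> XT" and R3: "R \<le> (XT/(R*R))^3"
    and y1: "y \<le> D*(R*R)/XT" and y2: "y*y \<le> D" and y0: "y \<ge> 0"
  shows "\<exists>d1 d2 :: nat. d1 > 0 \<and> d2 > 0 \<and> prod_list ps = d1 * d2 \<and> real d1 \<le> D \<and>
           real (d1 * d2^2) \<le> XT / D \<and> (real d1 \<ge> y \<or> d2 = 1)"
proof -
  have pos: "\<forall>p\<in>set ps. p > 0" using pr prime_gt_0_nat by blast
  obtain p1 rest0 where ps: "ps = p1 # rest0" using ne by (cases ps) auto
  have p1: "p1 > 0" using pos ps by auto
  have D0: "D \<ge> 1" using hd ps p1 by simp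
  have R0: "R \<ge> 1" using D0 DR by simp
  have XT0: "XT \<ge> 1" using R0 RR by (smt (verit) mult_le_cancel_left1)
  define d where "d = prod_list ps"
  show ?thesis
  proof (cases "real d \<le> D")
    case True
    have "D * R \<le> R * R" using DR R0 by simp
    then have "R \<le> XT / D" using RR D0 by (simp add: field_simps)
    moreover have "d > 0" using pos prod_list_pos d_def by auto
    ultimately show ?thesis using True dR d_def by - (rule exI[where x=d], rule exI[where x=1], auto)
  next
    case False
    then have "rest0 \<noteq> []" using hd ps d_def by auto
    then obtain p2 rest where r0: "rest0 = p2 # rest" by (cases rest0) auto
    have ps2: "ps = p1 # p2 # rest" using ps r0 by simp
    have p2: "p2 > 0" and p12: "p2 < p1" using pos so ps2 by auto
    have rl: "\<forall>q\<in>set rest. q < p2 \<and> q > 0" using so pos ps2 by auto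
    have dd: "d = p1 * p2 * prod_list rest" using d_def ps2 by simp
    have semv: "real (p1 * p2^2) \<le> R" using sem ps2 by simp
    have w0: "XT/(R*R) > 0" using XT0 R0 by simp
    have small_q: "real q \<le> XT/(R*R)" if qr: "q \<in> set rest" for q
    proof (rule ccontr)
      assume "\<not> real q \<le> XT/(R*R)"
      then have qw: "real q > XT/(R*R)" by simp
      have "q < p2" using rl qr by auto
      then have p2w: "real p2 > XT/(R*R)" and p1w: "real p1 > XT/(R*R)" using qw p12 by linarith+
      have "(XT/(R*R))^3 = (XT/(R*R)) * (XT/(R*R)) * (XT/(R*R))" by (simp add: power3_eq_cube)
      also have "\<dots> < real p1 * real p2 * real q"
        using p2w p1w qw w0 by (intro mult_strict_mono) (auto intro: mult_strict_mono mult_pos_pos)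
      also have "\<dots> \<le> real d"
      proof -
        have "q \<le> prod_list rest" using elem_le_prod_list rl qr by auto
        then have "p1 * p2 * q \<le> p1 * p2 * prod_list rest" by simp
        then show ?thesis using dd by (metis of_nat_le_iff of_nat_mult)
      qed
      finally show False using R3 dR d_def by simp
    qed
    have pra: "\<forall>p\<in>set rest. p > 0" using rl by auto
    show ?thesis
    proof (cases "real p1 * real p2 \<le> D")
      case True
      define B where "B = D / (real p1 * real p2)"
      have B1: "B \<ge> 1" using True p1 p2 by (simp add: B_def)
      obtain a b where g: "greedy B rest = (a, b)" by fastforce
      note G = greedy_props[OF pra B1 g]
      define d1 where "d1 = p1 * p2 * prod_list a"
      define d2 where "d2 = prod_list b"
      have pa: "prod_list a > 0" using prod_list_pos G pra by (meson subsetD)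
      have pb: "prod_list b > 0" using prod_list_pos G pra by (meson subsetD)
      have ddd: "d = d1 * d2" using dd G d1_def d2_def by (simp add: mult.assoc)
      have d1D: "real d1 \<le> D" using G B_def p1 p2 d1_def by (simp add: field_simps)
      have "b \<noteq> []"
      proof
        assume "b = []"
        then have "d1 = d" using ddd d2_def by simp
        then show False using False d1D by simp
      qed
      then obtain q where q: "q \<in> set b" by (cases b) auto
      have "real (prod_list a) * real q > B" using G q by auto
      then have "(real p1 * real p2) * (real (prod_list a) * real q) > (real p1 * real p2) * B"
        using p1 p2 by (intro mult_strict_left_mono) auto
      then have qD: "real d1 * real q > D" using B_def p1 p2 d1_def by (simp add: algebra_simps)
      have "real q \<le> XT/(R*R)" using small_q q G by auto
      then have "real (d1*d2^2) \<le> XT/D \<and> real d1 \<ge> y"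
        using small[of d1 d2 R q XT D y] ddd dR d_def qD y1 D0 R0 XT0 p1 p2 pa pb d1_def d2_def by simp
      then show ?thesis using ddd d_def p1 p2 pa pb d1_def d2_def d1D by - (rule exI[where x=d1], rule exI[where x=d2], auto)
    next
      case False
      define B where "B = D / real p1"
      have B1: "B \<ge> 1" using hd ps p1 by (simp add: B_def)
      obtain a b where g: "greedy B rest = (a, b)" by fastforce
      note G = greedy_props[OF pra B1 g]
      define d1 where "d1 = p1 * prod_list a"
      define d2 where "d2 = p2 * prod_list b"
      have pa: "prod_list a > 0" using prod_list_pos G pra by (meson subsetD)
      have pb: "prod_list b > 0" using prod_list_pos G pra by (meson subsetD)
      have ddd: "d = d1 * d2" using dd G d1_def d2_def by (simp add: algebra_simps)
      have d1D: "real d1 \<le> D" using G B_def p1 d1_def by (simp add: field_simps)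
      show ?thesis
      proof (cases "b = []")
        case True
        have d2e: "d2 = p2" using True d2_def by simp
        have "real (d1*d2^2) * D < real (d1 * d2^2) * (real p1 * real p2)"
          using False p1 p2 pa d1_def d2e by simp
        also have "\<dots> = real (p1 * p2^2) * real d" using ddd d2e by (simp add: power2_eq_square)
        also have "\<dots> \<le> R * R" using semv dR d_def by (intro mult_mono) auto
        also have "\<dots> \<le> XT" using RR .
        finally have c1: "real (d1*d2^2) \<le> XT/D" using D0 by (simp add: field_simps)
        have "y * y < real p1 * real p1" using y2 False p12
          by (smt (verit) mult_left_mono of_nat_0_le_iff of_nat_less_iff)
        then have "y < real p1" using y0 by (metis mult_mono linorder_not_less of_nat_0_le_iff)
        moreover have "p1 \<le> d1" using pa d1_def by simp
        ultimately have "real d1 \<ge> y" by linarith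
        then show ?thesis using c1 ddd d_def p1 p2 pa pb d1_def d2_def d1D by - (rule exI[where x=d1], rule exI[where x=d2], auto)
      next
        case bne: False
        then obtain q where q: "q \<in> set b" by (cases b) auto
        have "real (prod_list a) * real q > B" using G q by auto
        then have "real p1 * (real (prod_list a) * real q) > real p1 * B"
          using p1 by (intro mult_strict_left_mono) auto
        then have qD: "real d1 * real q > D" using B_def p1 d1_def by (simp add: algebra_simps)
        have "real q \<le> XT/(R*R)" using small_q q G by auto
        then have "real (d1*d2^2) \<le> XT/D \<and> real d1 \<ge> y"
          using small[of d1 d2 R q XT D y] ddd dR d_def qD y1 D0 R0 XT0 p1 p2 pa pb d1_def d2_def by simp
        then show ?thesis using ddd d_def p1 p2 pa pb d1_def d2_def d1D by - (rule exI[where x=d1], rule exI[where x=d2], auto)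
      qed
    qed
  qed
qed

theorem lemma10:
  shows "\<exists>\<epsilon>0>0. \<forall>\<epsilon>::real. 0 < \<epsilon> \<and> \<epsilon> < \<epsilon>0 \<longrightarrow>
    (\<exists>x0. \<forall>x::real. x \<ge> x0 \<longrightarrow>
      (\<forall>\<theta>::real. 0 \<le> \<theta> \<and> \<theta> \<le> 1/30 \<longrightarrow>
        (\<forall>z2::real. z2 \<le> x powr (1/3 - 2*\<theta> - 2*\<epsilon>^2) \<longrightarrow>
          (\<forall>D::real. x powr (1/3 - 2*\<theta> - 2*\<epsilon>^2) \<le> D \<and>
                     D \<le> x powr (3/7 * (1 - 4*\<theta>) - \<epsilon>) \<longrightarrow>
            (\<forall>d \<in> D_minus_SEM x (3/7 * (1 - 4*\<theta>) - \<epsilon>) z2.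
               \<exists>d1 d2 :: nat. d1 > 0 \<and> d2 > 0 \<and> d = d1 * d2 \<and>
                 real d1 \<le> D \<and>
                 real (d1 * d2^2) \<le> x powr (1 - 4*\<theta> - 2*\<epsilon>^2) / D \<and>
                 (real d1 \<ge> x powr (1/10) \<or> d2 = 1))))))"
proof (rule exI[where x="1/50::real"], rule conjI, simp, intro allI impI)
  fix \<epsilon> :: real assume e: "0 < \<epsilon> \<and> \<epsilon> < 1/50"
  show "\<exists>x0. \<forall>x::real. x \<ge> x0 \<longrightarrow>
      (\<forall>\<theta>::real. 0 \<le> \<theta> \<and> \<theta> \<le> 1/30 \<longrightarrow>
        (\<forall>z2::real. z2 \<le> x powr (1/3 - 2*\<theta> - 2*\<epsilon>^2) \<longrightarrow>
          (\<forall>D::real. x powr (1/3 - 2*\<theta> - 2*\<epsilon>^2) \<le> D \<and>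
                     D \<le> x powr (3/7 * (1 - 4*\<theta>) - \<epsilon>) \<longrightarrow>
            (\<forall>d \<in> D_minus_SEM x (3/7 * (1 - 4*\<theta>) - \<epsilon>) z2.
               \<exists>d1 d2 :: nat. d1 > 0 \<and> d2 > 0 \<and> d = d1 * d2 \<and>
                 real d1 \<le> D \<and>
                 real (d1 * d2^2) \<le> x powr (1 - 4*\<theta> - 2*\<epsilon>^2) / D \<and>
                 (real d1 \<ge> x powr (1/10) \<or> d2 = 1)))))"
  proof (intro exI[where x="2::real"] allI impI ballI)
    fix x \<theta> z2 D :: real and d :: nat
    assume x: "2 \<le> x" and th: "0 \<le> \<theta> \<and> \<theta> \<le> 1/30"
      and z2: "z2 \<le> x powr (1/3 - 2*\<theta> - 2*\<epsilon>^2)"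
      and DD: "x powr (1/3 - 2*\<theta> - 2*\<epsilon>^2) \<le> D \<and> D \<le> x powr (3/7 * (1 - 4*\<theta>) - \<epsilon>)"
      and dm: "d \<in> D_minus_SEM x (3/7 * (1 - 4*\<theta>) - \<epsilon>) z2"
    define \<rho> where "\<rho> = 3/7 * (1 - 4*\<theta>) - \<epsilon>"
    define T where "T = 1 - 4*\<theta> - 2*\<epsilon>^2"
    define \<zeta> where "\<zeta> = 1/3 - 2*\<theta> - 2*\<epsilon>^2"
    define R where "R = x powr \<rho>"
    define XT where "XT = x powr T"
    define y where "y = x powr (1/10)"
    have x1: "1 \<le> x" using x by simp
    have e2: "\<epsilon>^2 \<le> \<epsilon>/50" "0 \<le> \<epsilon>^2" using e by (auto simp: power2_eq_square)
    obtain ps where ps: "d = prod_list ps" "ps \<noteq> []" "\<forall>p\<in>set ps. prime p" "sorted_wrt (>) ps"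
      "real (hd ps) \<le> z2" "real (prod_list ps) \<le> R"
      "\<forall>k\<ge>1. 2 * k \<le> length ps \<longrightarrow>
          real (prod_list (take (2 * k - 1) ps) * (ps ! (2 * k - 1))^2) \<le> R"
      using dm unfolding D_minus_SEM_def R_def \<rho>_def by blast
    have sem: "real (hd ps * (ps ! 1)^2) \<le> R" if "length ps \<ge> 2"
    proof -
      have "real (prod_list (take 1 ps) * (ps ! 1)^2) \<le> R" using ps(7) that by (metis le_refl mult_1_right One_nat_def diff_Suc_1 numeral_2_eq_2 mult_2_right add_Suc_right add_0_right)
      moreover have "take 1 ps = [hd ps]" using ps(2) by (cases ps) auto
      ultimately show ?thesis by simp
    qed
    have ea: "0 < \<epsilon>" "\<epsilon> < 1/50" and tha: "0 \<le> \<theta>" "\<theta> \<le> 1/30" using e th by auto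
    have rho': "\<rho> = 3/7 - 12/7*\<theta> - \<epsilon>" unfolding \<rho>_def by (simp add: field_simps)
    have ex1: "\<rho>+\<rho> \<le> T" using rho' T_def \<zeta>_def ea e2 tha by linarith
    have ex2: "\<rho> \<le> (T - (\<rho>+\<rho>)) + (T - (\<rho>+\<rho>)) + (T - (\<rho>+\<rho>))"
      using rho' T_def \<zeta>_def ea e2 tha by linarith
    have ex3: "1/10 \<le> \<zeta> + (\<rho>+\<rho>) - T" using rho' T_def \<zeta>_def ea e2 tha by linarith
    have ex4: "1/10 + 1/10 \<le> \<zeta>" using rho' T_def \<zeta>_def ea e2 tha by linarith
    have DR: "D \<le> R" using DD R_def \<rho>_def by simp
    have hd: "real (hd ps) \<le> D" using ps(5) z2 DD by linarith
    have RRe: "R*R = x powr (\<rho>+\<rho>)" unfolding R_def by (rule powr_add[symmetric])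
    have RR: "R*R \<le> XT"
    proof -
      have "R*R = x powr (\<rho>+\<rho>)" unfolding R_def by (rule powr_add[symmetric])
      also have "\<dots> \<le> XT" unfolding XT_def
        by (rule powr_mono[OF ex1 x1]) 
      finally show ?thesis .
    qed
    have W: "XT/(R*R) = x powr (T - (\<rho>+\<rho>))" unfolding RRe XT_def by (rule powr_diff[symmetric])
    have R3: "R \<le> (XT/(R*R))^3"
    proof -
      have "(XT/(R*R))^3 = x powr ((T - (\<rho>+\<rho>)) + (T - (\<rho>+\<rho>)) + (T - (\<rho>+\<rho>)))"
        unfolding W power3_eq_cube by (simp only: powr_add[symmetric])
      moreover have "R \<le> x powr ((T - (\<rho>+\<rho>)) + (T - (\<rho>+\<rho>)) + (T - (\<rho>+\<rho>)))"
        unfolding R_def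
        by (rule powr_mono[OF ex2 x1]) 
      ultimately show ?thesis by simp
    qed
    have y1: "y \<le> D*(R*R)/XT"
    proof -
      have "y \<le> x powr (\<zeta> + (\<rho>+\<rho>) - T)"
        unfolding y_def
        by (rule powr_mono[OF ex3 x1]) 
      also have "\<dots> = x powr \<zeta> * (R*R) / XT" unfolding RRe XT_def by (simp add: powr_diff powr_add)
      also have "\<dots> \<le> D*(R*R)/XT" using DD \<zeta>_def XT_def
        by (intro divide_right_mono mult_right_mono) auto
      finally show ?thesis .
    qed
    have y2: "y*y \<le> D"
    proof -
      have "y*y = x powr (1/10 + 1/10)" unfolding y_def by (rule powr_add[symmetric])
      also have "\<dots> \<le> x powr \<zeta>" by (rule powr_mono[OF ex4 x1]) 
      finally show ?thesis using DD \<zeta>_def by simp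
    qed
    have y0: "y \<ge> 0" by (simp add: y_def)
    from core[OF ps(2) ps(3) ps(4) hd ps(6) sem DR RR R3 y1 y2 y0]
    show "\<exists>d1 d2 :: nat. d1 > 0 \<and> d2 > 0 \<and> d = d1 * d2 \<and>
                 real d1 \<le> D \<and>
                 real (d1 * d2^2) \<le> x powr (1 - 4*\<theta> - 2*\<epsilon>^2) / D \<and>
                 (real d1 \<ge> x powr (1/10) \<or> d2 = 1)"
      using ps(1) XT_def T_def y_def by simp
  qed
qed

end
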